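(* Let $\mathbb{A}=(\mathbb{L},(\lozenge_i)_{i\in\mathsf{Ag}},(\Box_i)_{i\in\mathsf{Ag}})$ be an epistemic Heyting algebra and $a\in\mathbb{A}$. Then the pseudo-quotient algebra $\mathbb{A}^a$ is an epistemic Heyting algebra.
   Context: Fix a set $\mathsf{Ag}$ of agents. A monadic Heyting algebra is a Heyting algebra $\mathbb{L}$ with, for each $i\in\mathsf{Ag}$, monotone unary operations $\lozenge_i,\Box_i$ such that for all $a,b$: $a\leq\lozenge_i a$; $\Box_i a\leq a$; $\lozenge_i(a\vee b)\leq\lozenge_i a\vee\lozenge_i b$; $\Box_i(a\to b)\leq\Box_i a\to\Box_i b$; $\lozenge_i a\leq\Box_i\lozenge_i a$; $\lozenge_i\Box_i a\leq\Box_i a$; $\Box_i(a\to b)\leq\lozenge_i a\to\lozenge_i b$; $\lozenge_i\bot\leq\bot$; $\top\leq\Box_i\top$. An epistemic Heyting algebra is a finite monadic Heyting algebra with $\lozenge_i a\vee\neg\lozenge_i a=\top$ for all $i,a$. The pseudo-quotient algebra $\mathbb{A}^a=(\mathbb{L}/{\cong_a},(\lozenge^a_i),(\Box^a_i))$: $b\cong_a c$ iff $b\wedge a=c\wedge a$; $\mathbb{L}/{\cong_a}$ is the quotient Heyting algebra (writing $[c]$ for the class of $c$); and $\lozenge^a_i[b]=[\lozenge_i(b\wedge a)]$, $\Box^a_i[b]=[\Box_i(a\to b)]$. *)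

theory Defs
  imports Main
begin

record ('i, 'a) mha =
  carrier :: "'a set"
  meet :: "'a \<Rightarrow> 'a \<Rightarrow> 'a"
  join :: "'a \<Rightarrow> 'a \<Rightarrow> 'a"
  imp  :: "'a \<Rightarrow> 'a \<Rightarrow> 'a"
  bot  :: 'a
  top  :: 'a
  dia  :: "'i \<Rightarrow> 'a \<Rightarrow> 'a"
  box  :: "'i \<Rightarrow> 'a \<Rightarrow> 'a"

definition le :: "('i, 'a) mha \<Rightarrow> 'a \<Rightarrow> 'a \<Rightarrow> bool" where
  "le A x y \<longleftrightarrow> meet A x y = x"

definition neg :: "('i, 'a) mha \<Rightarrow> 'a \<Rightarrow> 'a" where
  "neg A x = imp A x (bot A)"

definition heyting_algebra :: "('i, 'a) mha \<Rightarrow> bool" where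
  "heyting_algebra A \<longleftrightarrow>
     bot A \<in> carrier A \<and> top A \<in> carrier A \<and>
     (\<forall>x\<in>carrier A. \<forall>y\<in>carrier A.
        meet A x y \<in> carrier A \<and> join A x y \<in> carrier A \<and> imp A x y \<in> carrier A) \<and>
     (\<forall>x\<in>carrier A. \<forall>y\<in>carrier A. \<forall>z\<in>carrier A.
        meet A (meet A x y) z = meet A x (meet A y z) \<and>
        join A (join A x y) z = join A x (join A y z)) \<and>
     (\<forall>x\<in>carrier A. \<forall>y\<in>carrier A.
        meet A x y = meet A y x \<and> join A x y = join A y x \<and>
        meet A x (join A x y) = x \<and> join A x (meet A x y) = x) \<and>
     (\<forall>x\<in>carrier A. le A (bot A) x \<and> le A x (top A)) \<and>
     (\<forall>x\<in>carrier A. \<forall>y\<in>carrier A. \<forall>z\<in>carrier A.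
        le A z (imp A x y) \<longleftrightarrow> le A (meet A z x) y)"

definition monadic_heyting_algebra :: "'i set \<Rightarrow> ('i, 'a) mha \<Rightarrow> bool" where
  "monadic_heyting_algebra Ag A \<longleftrightarrow>
     heyting_algebra A \<and>
     (\<forall>i\<in>Ag.
        (\<forall>x\<in>carrier A. dia A i x \<in> carrier A \<and> box A i x \<in> carrier A) \<and>
        (\<forall>x\<in>carrier A. \<forall>y\<in>carrier A. le A x y \<longrightarrow>
            le A (dia A i x) (dia A i y) \<and> le A (box A i x) (box A i y)) \<and>
        (\<forall>a\<in>carrier A. \<forall>b\<in>carrier A.
           le A a (dia A i a) \<and>
           le A (box A i a) a \<and>
           le A (dia A i (join A a b)) (join A (dia A i a) (dia A i b)) \<and>
           le A (box A i (imp A a b)) (imp A (box A i a) (box A i b)) \<and>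
           le A (dia A i a) (box A i (dia A i a)) \<and>
           le A (dia A i (box A i a)) (box A i a) \<and>
           le A (box A i (imp A a b)) (imp A (dia A i a) (dia A i b))) \<and>
        le A (dia A i (bot A)) (bot A) \<and>
        le A (top A) (box A i (top A)))"

definition epistemic_heyting_algebra :: "'i set \<Rightarrow> ('i, 'a) mha \<Rightarrow> bool" where
  "epistemic_heyting_algebra Ag A \<longleftrightarrow>
     monadic_heyting_algebra Ag A \<and> finite (carrier A) \<and>
     (\<forall>i\<in>Ag. \<forall>x\<in>carrier A.
        join A (dia A i x) (neg A (dia A i x)) = top A)"

definition cls :: "('i, 'a) mha \<Rightarrow> 'a \<Rightarrow> 'a \<Rightarrow> 'a set" where
  "cls A a b = {c \<in> carrier A. meet A c a = meet A b a}"

definition rep :: "'a set \<Rightarrow> 'a" where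
  "rep X = (SOME x. x \<in> X)"

definition pseudo_quotient :: "('i, 'a) mha \<Rightarrow> 'a \<Rightarrow> ('i, 'a set) mha" where
  "pseudo_quotient A a =
    \<lparr> carrier = cls A a ` carrier A,
      meet = (\<lambda>X Y. cls A a (meet A (rep X) (rep Y))),
      join = (\<lambda>X Y. cls A a (join A (rep X) (rep Y))),
      imp  = (\<lambda>X Y. cls A a (imp A (rep X) (rep Y))),
      bot  = cls A a (bot A),
      top  = cls A a (top A),
      dia  = (\<lambda>i X. cls A a (dia A i (meet A (rep X) a))),
      box  = (\<lambda>i X. cls A a (box A i (imp A a (rep X)))) \<rparr>"

end

theory Submission
  imports Defs
begin

locale HA =
  fixes A :: "('i, 'a) mha"
  assumes ha: "heyting_algebra A"
begin

abbreviation "C \<equiv> carrier A"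
abbreviation mt (infixl "\<sqinter>" 70) where "x \<sqinter> y \<equiv> meet A x y"
abbreviation jn (infixl "\<squnion>" 65) where "x \<squnion> y \<equiv> join A x y"
abbreviation im (infixr "\<Rightarrow>\<^sub>A" 60) where "x \<Rightarrow>\<^sub>A y \<equiv> imp A x y"
abbreviation lq (infix "\<preceq>" 50) where "x \<preceq> y \<equiv> le A x y"

lemma cl[simp]: "bot A \<in> C" "top A \<in> C"
  "x \<in> C \<Longrightarrow> y \<in> C \<Longrightarrow> x \<sqinter> y \<in> C"
  "x \<in> C \<Longrightarrow> y \<in> C \<Longrightarrow> x \<squnion> y \<in> C"
  "x \<in> C \<Longrightarrow> y \<in> C \<Longrightarrow> (x \<Rightarrow>\<^sub>A y) \<in> C"
  using ha unfolding heyting_algebra_def by auto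

lemma massoc: "x \<in> C \<Longrightarrow> y \<in> C \<Longrightarrow> z \<in> C \<Longrightarrow> x \<sqinter> y \<sqinter> z = x \<sqinter> (y \<sqinter> z)"
  and jassoc: "x \<in> C \<Longrightarrow> y \<in> C \<Longrightarrow> z \<in> C \<Longrightarrow> x \<squnion> y \<squnion> z = x \<squnion> (y \<squnion> z)"
  and mcomm: "x \<in> C \<Longrightarrow> y \<in> C \<Longrightarrow> x \<sqinter> y = y \<sqinter> x"
  and jcomm: "x \<in> C \<Longrightarrow> y \<in> C \<Longrightarrow> x \<squnion> y = y \<squnion> x"
  and abs1: "x \<in> C \<Longrightarrow> y \<in> C \<Longrightarrow> x \<sqinter> (x \<squnion> y) = x"
  and abs2: "x \<in> C \<Longrightarrow> y \<in> C \<Longrightarrow> x \<squnion> (x \<sqinter> y) = x"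
  and botle: "x \<in> C \<Longrightarrow> bot A \<preceq> x"
  and letop: "x \<in> C \<Longrightarrow> x \<preceq> top A"
  and impiff: "x \<in> C \<Longrightarrow> y \<in> C \<Longrightarrow> z \<in> C \<Longrightarrow> z \<preceq> (x \<Rightarrow>\<^sub>A y) \<longleftrightarrow> z \<sqinter> x \<preceq> y"
  using ha unfolding heyting_algebra_def by auto

lemma midem: "x \<in> C \<Longrightarrow> x \<sqinter> x = x"
proof -
  assume c: "x \<in> C"
  have "x \<squnion> (x \<sqinter> x) = x" using abs2 c by simp
  hence "x \<sqinter> x = x \<sqinter> (x \<squnion> (x \<sqinter> x))" by simp
  also have "\<dots> = x" using abs1 c by simp
  finally show ?thesis .
qed

lemma le_refl: "x \<in> C \<Longrightarrow> x \<preceq> x"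
  by (simp add: le_def midem)

lemma le_antisym: "x \<in> C \<Longrightarrow> y \<in> C \<Longrightarrow> x \<preceq> y \<Longrightarrow> y \<preceq> x \<Longrightarrow> x = y"
  unfolding le_def using mcomm by force

lemma le_trans: "x \<in> C \<Longrightarrow> y \<in> C \<Longrightarrow> z \<in> C \<Longrightarrow> x \<preceq> y \<Longrightarrow> y \<preceq> z \<Longrightarrow> x \<preceq> z"
  unfolding le_def using massoc by force

lemma le_meet_iff: "x \<in> C \<Longrightarrow> y \<in> C \<Longrightarrow> z \<in> C \<Longrightarrow> z \<preceq> x \<sqinter> y \<longleftrightarrow> z \<preceq> x \<and> z \<preceq> y"
proof -
  assume c: "x \<in> C" "y \<in> C" "z \<in> C"
  have "x \<sqinter> y \<sqinter> x = x \<sqinter> (y \<sqinter> x)" using c massoc by simp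
  also have "\<dots> = x \<sqinter> (x \<sqinter> y)" using c mcomm by simp
  also have "\<dots> = x \<sqinter> x \<sqinter> y" using c massoc by simp
  also have "\<dots> = x \<sqinter> y" using c midem by simp
  finally have 1: "x \<sqinter> y \<preceq> x" unfolding le_def .
  have "x \<sqinter> y \<sqinter> y = x \<sqinter> (y \<sqinter> y)" using c massoc by simp
  also have "\<dots> = x \<sqinter> y" using c midem by simp
  finally have 2: "x \<sqinter> y \<preceq> y" unfolding le_def .
  show ?thesis
  proof
    assume h: "z \<preceq> x \<sqinter> y"
    have "z \<preceq> x" using le_trans[OF _ _ _ h 1] c by simp
    moreover have "z \<preceq> y" using le_trans[OF _ _ _ h 2] c by simp
    ultimately show "z \<preceq> x \<and> z \<preceq> y" ..
  next
    assume "z \<preceq> x \<and> z \<preceq> y"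
    hence "z \<sqinter> x = z" "z \<sqinter> y = z" unfolding le_def by auto
    hence "z \<sqinter> (x \<sqinter> y) = z" using c massoc[of z x y] by simp
    thus "z \<preceq> x \<sqinter> y" unfolding le_def .
  qed
qed

lemma le_join_iff: "x \<in> C \<Longrightarrow> y \<in> C \<Longrightarrow> x \<preceq> y \<longleftrightarrow> x \<squnion> y = y"
proof
  assume c: "x \<in> C" "y \<in> C" and "x \<preceq> y"
  hence "x \<sqinter> y = x" by (simp add: le_def)
  hence "x \<squnion> y = y \<squnion> (y \<sqinter> x)" using c jcomm[of x y] mcomm[of x y] by simp
  thus "x \<squnion> y = y" using abs2 c by simp
next
  assume c: "x \<in> C" "y \<in> C" and "x \<squnion> y = y"
  hence "x \<sqinter> y = x \<sqinter> (x \<squnion> y)" by simp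
  thus "x \<preceq> y" using abs1 c unfolding le_def by simp
qed

lemma join_le_iff: "x \<in> C \<Longrightarrow> y \<in> C \<Longrightarrow> z \<in> C \<Longrightarrow> x \<squnion> y \<preceq> z \<longleftrightarrow> x \<preceq> z \<and> y \<preceq> z"
proof -
  assume c: "x \<in> C" "y \<in> C" "z \<in> C"
  have 1: "x \<preceq> x \<squnion> y" using c unfolding le_def by (simp add: abs1)
  have 2: "y \<preceq> x \<squnion> y" using c abs1[of y x] jcomm[of x y] unfolding le_def by simp
  show ?thesis
  proof
    assume h: "x \<squnion> y \<preceq> z"
    have "x \<preceq> z" using le_trans[OF _ _ _ 1 h] c by simp
    moreover have "y \<preceq> z" using le_trans[OF _ _ _ 2 h] c by simp
    ultimately show "x \<preceq> z \<and> y \<preceq> z" ..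
  next
    assume "x \<preceq> z \<and> y \<preceq> z"
    hence "x \<squnion> z = z" "y \<squnion> z = z" using c le_join_iff by auto
    hence "x \<squnion> y \<squnion> z = z" using c jassoc[of x y z] by simp
    thus "x \<squnion> y \<preceq> z" using c le_join_iff by simp
  qed
qed

lemma le_ext: "x \<in> C \<Longrightarrow> y \<in> C \<Longrightarrow> (\<And>z. z \<in> C \<Longrightarrow> z \<preceq> x \<longleftrightarrow> z \<preceq> y) \<Longrightarrow> x = y"
proof -
  assume c: "x \<in> C" "y \<in> C" and h: "\<And>z. z \<in> C \<Longrightarrow> z \<preceq> x \<longleftrightarrow> z \<preceq> y"
  have "x \<preceq> y" using h[of x] le_refl[of x] c by simp
  moreover have "y \<preceq> x" using h[of y] le_refl[of y] c by simp
  ultimately show ?thesis using le_antisym c by simp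
qed

lemma distr: "x \<in> C \<Longrightarrow> y \<in> C \<Longrightarrow> z \<in> C \<Longrightarrow> x \<sqinter> (y \<squnion> z) = (x \<sqinter> y) \<squnion> (x \<sqinter> z)"
proof -
  assume c: "x \<in> C" "y \<in> C" "z \<in> C"
  define R where "R = (x \<sqinter> y) \<squnion> (x \<sqinter> z)"
  have r: "R \<in> C" using c by (simp add: R_def)
  have a1: "x \<sqinter> y \<preceq> R" "x \<sqinter> z \<preceq> R"
    using join_le_iff[of "x \<sqinter> y" "x \<sqinter> z" R] c r le_refl[of R] unfolding R_def by auto
  have "y \<sqinter> x \<preceq> R" using a1 mcomm[of x y] c by simp
  hence y1: "y \<preceq> (x \<Rightarrow>\<^sub>A R)" using impiff[of x R y] c r by simp
  have "z \<sqinter> x \<preceq> R" using a1 mcomm[of x z] c by simp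
  hence z1: "z \<preceq> (x \<Rightarrow>\<^sub>A R)" using impiff[of x R z] c r by simp
  have "y \<squnion> z \<preceq> (x \<Rightarrow>\<^sub>A R)" using join_le_iff[of y z "x \<Rightarrow>\<^sub>A R"] c r y1 z1 by simp
  hence "(y \<squnion> z) \<sqinter> x \<preceq> R" using impiff[of x R "y \<squnion> z"] c r by simp
  hence 1: "x \<sqinter> (y \<squnion> z) \<preceq> R" using mcomm[of x "y \<squnion> z"] c by simp
  have j1: "y \<preceq> y \<squnion> z" "z \<preceq> y \<squnion> z" using join_le_iff[of y z "y \<squnion> z"] le_refl[of "y \<squnion> z"] c by auto
  have m1: "x \<sqinter> y \<preceq> x" "x \<sqinter> y \<preceq> y" "x \<sqinter> z \<preceq> x" "x \<sqinter> z \<preceq> z"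
    using le_meet_iff[of x y "x \<sqinter> y"] le_meet_iff[of x z "x \<sqinter> z"] le_refl c by auto
  have "x \<sqinter> y \<preceq> y \<squnion> z" using le_trans[OF _ _ _ m1(2) j1(1)] c by simp
  hence k1: "x \<sqinter> y \<preceq> x \<sqinter> (y \<squnion> z)" using le_meet_iff[of x "y \<squnion> z" "x \<sqinter> y"] m1 c by simp
  have "x \<sqinter> z \<preceq> y \<squnion> z" using le_trans[OF _ _ _ m1(4) j1(2)] c by simp
  hence k2: "x \<sqinter> z \<preceq> x \<sqinter> (y \<squnion> z)" using le_meet_iff[of x "y \<squnion> z" "x \<sqinter> z"] m1 c by simp
  have "R \<preceq> x \<sqinter> (y \<squnion> z)" using join_le_iff[of "x \<sqinter> y" "x \<sqinter> z" "x \<sqinter> (y \<squnion> z)"] k1 k2 c unfolding R_def by simp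
  thus ?thesis using 1 le_antisym[of "x \<sqinter> (y \<squnion> z)" R] c r unfolding R_def by simp
qed


lemma mle1: "x \<in> C \<Longrightarrow> y \<in> C \<Longrightarrow> x \<sqinter> y \<preceq> x"
  using le_meet_iff[of x y "x \<sqinter> y"] le_refl[of "x \<sqinter> y"] by simp
lemma mle2: "x \<in> C \<Longrightarrow> y \<in> C \<Longrightarrow> x \<sqinter> y \<preceq> y"
  using le_meet_iff[of x y "x \<sqinter> y"] le_refl[of "x \<sqinter> y"] by simp
lemma jge1: "x \<in> C \<Longrightarrow> y \<in> C \<Longrightarrow> x \<preceq> x \<squnion> y"
  using join_le_iff[of x y "x \<squnion> y"] le_refl[of "x \<squnion> y"] by simp
lemma jge2: "x \<in> C \<Longrightarrow> y \<in> C \<Longrightarrow> y \<preceq> x \<squnion> y"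
  using join_le_iff[of x y "x \<squnion> y"] le_refl[of "x \<squnion> y"] by simp
lemma mp: "x \<in> C \<Longrightarrow> y \<in> C \<Longrightarrow> (x \<Rightarrow>\<^sub>A y) \<sqinter> x \<preceq> y"
  using impiff[of x y "x \<Rightarrow>\<^sub>A y"] le_refl[of "x \<Rightarrow>\<^sub>A y"] by simp
lemma meet_mono: "x \<in> C \<Longrightarrow> y \<in> C \<Longrightarrow> z \<in> C \<Longrightarrow> x \<preceq> y \<Longrightarrow> x \<sqinter> z \<preceq> y \<sqinter> z"
proof -
  assume c: "x \<in> C" "y \<in> C" "z \<in> C" and h: "x \<preceq> y"
  have "x \<sqinter> z \<preceq> y" using le_trans[OF _ _ _ mle1[of x z] h] c by simp
  thus ?thesis using le_meet_iff[of y z "x \<sqinter> z"] mle2[of x z] c by simp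
qed
lemma imp_mono: "x \<in> C \<Longrightarrow> y \<in> C \<Longrightarrow> z \<in> C \<Longrightarrow> x \<preceq> y \<Longrightarrow> (z \<Rightarrow>\<^sub>A x) \<preceq> (z \<Rightarrow>\<^sub>A y)"
proof -
  assume c: "x \<in> C" "y \<in> C" "z \<in> C" and h: "x \<preceq> y"
  have "(z \<Rightarrow>\<^sub>A x) \<sqinter> z \<preceq> y" using le_trans[OF _ _ _ mp[of z x] h] c by simp
  thus ?thesis using impiff[of z y "z \<Rightarrow>\<^sub>A x"] c by simp
qed
lemma le_meetD: "x \<in> C \<Longrightarrow> y \<in> C \<Longrightarrow> x \<preceq> y \<Longrightarrow> x \<sqinter> y = x"
  by (simp add: le_def)
lemma trans_m1: "x \<in> C \<Longrightarrow> y \<in> C \<Longrightarrow> z \<in> C \<Longrightarrow> x \<preceq> z \<Longrightarrow> x \<sqinter> y \<preceq> z"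
  using le_trans[OF _ _ _ mle1[of x y]] by simp

end


locale PQ = HA +
  fixes a
  assumes aC: "a \<in> C"
begin

abbreviation "Q \<equiv> pseudo_quotient A a"
abbreviation "cl \<equiv> cls A a"

lemma fm: "x \<in> C \<Longrightarrow> y \<in> C \<Longrightarrow> x \<sqinter> y \<sqinter> a = (x \<sqinter> a) \<sqinter> (y \<sqinter> a)"
  by (rule le_ext) (auto simp add: le_meet_iff aC)

lemma fj: "x \<in> C \<Longrightarrow> y \<in> C \<Longrightarrow> (x \<squnion> y) \<sqinter> a = (x \<sqinter> a) \<squnion> (y \<sqinter> a)"
  using distr[of a x y] mcomm aC by simp

lemma ai: "x \<in> C \<Longrightarrow> (a \<Rightarrow>\<^sub>A x) = (a \<Rightarrow>\<^sub>A (x \<sqinter> a))"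
  by (rule le_ext) (auto simp add: impiff le_meet_iff aC mle2)

lemma fi: "x \<in> C \<Longrightarrow> y \<in> C \<Longrightarrow> (x \<Rightarrow>\<^sub>A y) \<sqinter> a = ((x \<sqinter> a) \<Rightarrow>\<^sub>A (y \<sqinter> a)) \<sqinter> a"
proof (rule le_ext)
  fix z assume c: "x \<in> C" "y \<in> C" "z \<in> C"
  show "z \<preceq> (x \<Rightarrow>\<^sub>A y) \<sqinter> a \<longleftrightarrow> z \<preceq> ((x \<sqinter> a) \<Rightarrow>\<^sub>A (y \<sqinter> a)) \<sqinter> a"
  proof (cases "z \<preceq> a")
    case True
    have za: "z \<sqinter> a = z" using le_meetD True c aC by simp
    have "z \<sqinter> (x \<sqinter> a) = z \<sqinter> (a \<sqinter> x)" using mcomm[of x a] c aC by simp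
    also have "\<dots> = z \<sqinter> a \<sqinter> x" using massoc[of z a x] c aC by simp
    finally have e: "z \<sqinter> (x \<sqinter> a) = z \<sqinter> x" using za by simp
    have "z \<sqinter> x \<preceq> a" using trans_m1[OF _ _ _ True] c aC by simp
    thus ?thesis using e True c aC by (simp add: le_meet_iff impiff)
  next
    case False
    thus ?thesis using c aC by (simp add: le_meet_iff)
  qed
qed (use aC in auto)

lemma cls_eq: "x \<in> C \<Longrightarrow> y \<in> C \<Longrightarrow> cl x = cl y \<longleftrightarrow> x \<sqinter> a = y \<sqinter> a"
proof
  assume c: "x \<in> C" "y \<in> C" and "cl x = cl y"
  moreover have "x \<in> cl x" using c unfolding cls_def by simp
  ultimately show "x \<sqinter> a = y \<sqinter> a" unfolding cls_def by simp
next
  assume "x \<sqinter> a = y \<sqinter> a"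
  thus "cl x = cl y" unfolding cls_def by simp
qed

lemma rep_cls: "x \<in> C \<Longrightarrow> rep (cl x) \<in> C \<and> rep (cl x) \<sqinter> a = x \<sqinter> a"
proof -
  assume c: "x \<in> C"
  have "x \<in> cl x" using c unfolding cls_def by simp
  hence "rep (cl x) \<in> cl x" unfolding rep_def by (rule someI)
  thus ?thesis unfolding cls_def by simp
qed

lemma Qcar: "carrier Q = cl ` C"
  by (simp add: pseudo_quotient_def)

lemma Qmeet: "x \<in> C \<Longrightarrow> y \<in> C \<Longrightarrow> meet Q (cl x) (cl y) = cl (x \<sqinter> y)"
proof -
  assume c: "x \<in> C" "y \<in> C"
  obtain r s where r: "rep (cl x) = r" "r \<in> C" "r \<sqinter> a = x \<sqinter> a"
    and s: "rep (cl y) = s" "s \<in> C" "s \<sqinter> a = y \<sqinter> a" using rep_cls c by blast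
  have "r \<sqinter> s \<sqinter> a = x \<sqinter> y \<sqinter> a" using fm[of r s] fm[of x y] r s c by simp
  thus ?thesis using r s c cls_eq by (simp add: pseudo_quotient_def)
qed

lemma Qjoin: "x \<in> C \<Longrightarrow> y \<in> C \<Longrightarrow> join Q (cl x) (cl y) = cl (x \<squnion> y)"
proof -
  assume c: "x \<in> C" "y \<in> C"
  obtain r s where r: "rep (cl x) = r" "r \<in> C" "r \<sqinter> a = x \<sqinter> a"
    and s: "rep (cl y) = s" "s \<in> C" "s \<sqinter> a = y \<sqinter> a" using rep_cls c by blast
  have "(r \<squnion> s) \<sqinter> a = (x \<squnion> y) \<sqinter> a" using fj[of r s] fj[of x y] r s c by simp
  thus ?thesis using r s c cls_eq by (simp add: pseudo_quotient_def)
qed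

lemma Qimp: "x \<in> C \<Longrightarrow> y \<in> C \<Longrightarrow> imp Q (cl x) (cl y) = cl (x \<Rightarrow>\<^sub>A y)"
proof -
  assume c: "x \<in> C" "y \<in> C"
  obtain r s where r: "rep (cl x) = r" "r \<in> C" "r \<sqinter> a = x \<sqinter> a"
    and s: "rep (cl y) = s" "s \<in> C" "s \<sqinter> a = y \<sqinter> a" using rep_cls c by blast
  have "(r \<Rightarrow>\<^sub>A s) \<sqinter> a = (x \<Rightarrow>\<^sub>A y) \<sqinter> a" using fi[of r s] fi[of x y] r s c by simp
  thus ?thesis using r s c cls_eq by (simp add: pseudo_quotient_def)
qed

lemma Qdia: "x \<in> C \<Longrightarrow> dia Q i (cl x) = cl (dia A i (x \<sqinter> a))"
  using rep_cls[of x] by (simp add: pseudo_quotient_def)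

lemma Qbox: "x \<in> C \<Longrightarrow> box Q i (cl x) = cl (box A i (a \<Rightarrow>\<^sub>A x))"
  using rep_cls[of x] ai[of x] ai[of "rep (cl x)"] by (simp add: pseudo_quotient_def)

lemma Qbot: "bot Q = cl (bot A)" and Qtop: "top Q = cl (top A)"
  by (simp_all add: pseudo_quotient_def)

lemma Qle: "x \<in> C \<Longrightarrow> y \<in> C \<Longrightarrow> le Q (cl x) (cl y) \<longleftrightarrow> x \<sqinter> a \<preceq> y"
proof -
  assume c: "x \<in> C" "y \<in> C"
  have "le Q (cl x) (cl y) \<longleftrightarrow> x \<sqinter> y \<sqinter> a = x \<sqinter> a"
    unfolding le_def using Qmeet c cls_eq by simp
  also have "\<dots> \<longleftrightarrow> x \<sqinter> a \<preceq> y \<sqinter> a" using fm[of x y] c aC midem[of a] massoc[of x a a]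
    unfolding le_def by simp
  also have "\<dots> \<longleftrightarrow> x \<sqinter> a \<preceq> y" using le_meet_iff[of y a "x \<sqinter> a"] mle2[of x a] c aC by simp
  finally show ?thesis .
qed


lemma BI: "(\<forall>X\<in>f ` S. P X) \<longleftrightarrow> (\<forall>x\<in>S. P (f x))"
  by auto

lemma mAC: "x \<in> C \<Longrightarrow> y \<in> C \<Longrightarrow> z \<in> C \<Longrightarrow> x \<sqinter> z \<sqinter> y = x \<sqinter> y \<sqinter> z"
  using massoc[of x z y] massoc[of x y z] mcomm[of y z] by simp

lemma QHA: "heyting_algebra Q"
proof -
  have h1: "\<forall>x\<in>C. \<forall>y\<in>C. meet Q (cl x) (cl y) \<in> carrier Q \<and> join Q (cl x) (cl y) \<in> carrier Q \<and> imp Q (cl x) (cl y) \<in> carrier Q"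
    by (simp add: Qmeet Qjoin Qimp Qcar)
  have h2: "\<forall>x\<in>C. \<forall>y\<in>C. \<forall>z\<in>C. meet Q (meet Q (cl x) (cl y)) (cl z) = meet Q (cl x) (meet Q (cl y) (cl z)) \<and>
        join Q (join Q (cl x) (cl y)) (cl z) = join Q (cl x) (join Q (cl y) (cl z))"
    by (simp add: Qmeet Qjoin massoc jassoc)
  have h3: "\<forall>x\<in>C. \<forall>y\<in>C. meet Q (cl x) (cl y) = meet Q (cl y) (cl x) \<and> join Q (cl x) (cl y) = join Q (cl y) (cl x) \<and>
        meet Q (cl x) (join Q (cl x) (cl y)) = cl x \<and> join Q (cl x) (meet Q (cl x) (cl y)) = cl x"
  proof (intro ballI conjI)
    fix x y assume c: "x \<in> C" "y \<in> C"
    show "meet Q (cl x) (cl y) = meet Q (cl y) (cl x)" using c mcomm[of x y] by (simp add: Qmeet)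
    show "join Q (cl x) (cl y) = join Q (cl y) (cl x)" using c jcomm[of x y] by (simp add: Qjoin)
    show "meet Q (cl x) (join Q (cl x) (cl y)) = cl x" using c abs1[of x y] by (simp add: Qmeet Qjoin)
    show "join Q (cl x) (meet Q (cl x) (cl y)) = cl x" using c abs2[of x y] by (simp add: Qmeet Qjoin)
  qed
  have h4: "\<forall>x\<in>C. le Q (bot Q) (cl x) \<and> le Q (cl x) (top Q)"
  proof (intro ballI conjI)
    fix x assume c: "x \<in> C"
    show "le Q (bot Q) (cl x)" using c Qle[of "bot A" x] trans_m1[OF _ _ _ botle[of x]] aC by (simp add: Qbot)
    show "le Q (cl x) (top Q)" using c Qle[of x "top A"] trans_m1[OF _ _ _ letop[of x]] aC by (simp add: Qtop)
  qed
  have h5: "\<forall>x\<in>C. \<forall>y\<in>C. \<forall>z\<in>C. le Q (cl z) (imp Q (cl x) (cl y)) \<longleftrightarrow> le Q (meet Q (cl z) (cl x)) (cl y)"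
  proof (intro ballI)
    fix x y z assume c: "x \<in> C" "y \<in> C" "z \<in> C"
    have "le Q (cl z) (imp Q (cl x) (cl y)) \<longleftrightarrow> z \<sqinter> a \<preceq> (x \<Rightarrow>\<^sub>A y)" using c by (simp add: Qimp Qle)
    also have "\<dots> \<longleftrightarrow> z \<sqinter> a \<sqinter> x \<preceq> y" using c aC impiff by simp
    also have "\<dots> \<longleftrightarrow> z \<sqinter> x \<sqinter> a \<preceq> y" using c aC mAC[of z x a] by simp
    also have "\<dots> \<longleftrightarrow> le Q (meet Q (cl z) (cl x)) (cl y)" using c by (simp add: Qmeet Qle)
    finally show "le Q (cl z) (imp Q (cl x) (cl y)) \<longleftrightarrow> le Q (meet Q (cl z) (cl x)) (cl y)" .
  qed
  show ?thesis unfolding heyting_algebra_def Qcar BI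
    using h1 h2 h3 h4 h5 by (simp add: Qcar Qbot Qtop)
qed

end


locale EPQ = PQ +
  fixes Ag
  assumes E: "epistemic_heyting_algebra Ag A"
begin

lemma M: "monadic_heyting_algebra Ag A"
  using E unfolding epistemic_heyting_algebra_def by simp

lemma dC[simp]: "i \<in> Ag \<Longrightarrow> x \<in> C \<Longrightarrow> dia A i x \<in> C"
  and bC[simp]: "i \<in> Ag \<Longrightarrow> x \<in> C \<Longrightarrow> box A i x \<in> C"
  using M unfolding monadic_heyting_algebra_def by auto

lemma dmono: "i \<in> Ag \<Longrightarrow> x \<in> C \<Longrightarrow> y \<in> C \<Longrightarrow> x \<preceq> y \<Longrightarrow> dia A i x \<preceq> dia A i y"
  and bmono: "i \<in> Ag \<Longrightarrow> x \<in> C \<Longrightarrow> y \<in> C \<Longrightarrow> x \<preceq> y \<Longrightarrow> box A i x \<preceq> box A i y"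
  using M unfolding monadic_heyting_algebra_def by auto

lemma ax: "i \<in> Ag \<Longrightarrow> x \<in> C \<Longrightarrow> y \<in> C \<Longrightarrow>
           x \<preceq> dia A i x \<and>
           box A i x \<preceq> x \<and>
           dia A i (x \<squnion> y) \<preceq> dia A i x \<squnion> dia A i y \<and>
           box A i (x \<Rightarrow>\<^sub>A y) \<preceq> (box A i x \<Rightarrow>\<^sub>A box A i y) \<and>
           dia A i x \<preceq> box A i (dia A i x) \<and>
           dia A i (box A i x) \<preceq> box A i x \<and>
           box A i (x \<Rightarrow>\<^sub>A y) \<preceq> (dia A i x \<Rightarrow>\<^sub>A dia A i y)"
  using M unfolding monadic_heyting_algebra_def by blast

lemma ax8: "i \<in> Ag \<Longrightarrow> dia A i (bot A) \<preceq> bot A"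
  and ax9: "i \<in> Ag \<Longrightarrow> top A \<preceq> box A i (top A)"
  using M unfolding monadic_heyting_algebra_def by auto

lemma epi: "i \<in> Ag \<Longrightarrow> x \<in> C \<Longrightarrow> dia A i x \<squnion> (dia A i x \<Rightarrow>\<^sub>A bot A) = top A"
  using E unfolding epistemic_heyting_algebra_def neg_def by auto

lemma finC: "finite C"
  using E unfolding epistemic_heyting_algebra_def by auto

lemma K: "x \<in> C \<Longrightarrow> y \<in> C \<Longrightarrow> (a \<Rightarrow>\<^sub>A (x \<Rightarrow>\<^sub>A y)) \<preceq> ((a \<Rightarrow>\<^sub>A x) \<Rightarrow>\<^sub>A (a \<Rightarrow>\<^sub>A y))"
proof -
  assume c: "x \<in> C" "y \<in> C"
  define u where "u = (a \<Rightarrow>\<^sub>A (x \<Rightarrow>\<^sub>A y))"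
  define v where "v = (a \<Rightarrow>\<^sub>A x)"
  have uv: "u \<in> C" "v \<in> C" using c aC unfolding u_def v_def by simp_all
  define w where "w = u \<sqinter> v \<sqinter> a"
  have wC: "w \<in> C" using uv aC unfolding w_def by simp
  have "w \<preceq> u \<sqinter> a" unfolding w_def using meet_mono[OF _ _ _ mle1[of u v]] uv aC by simp
  hence w1: "w \<preceq> (x \<Rightarrow>\<^sub>A y)" using le_trans[OF _ _ _ _ mp[of a "x \<Rightarrow>\<^sub>A y"]] wC uv aC c unfolding u_def by simp
  have "w \<preceq> v \<sqinter> a" unfolding w_def using meet_mono[OF _ _ _ mle2[of u v]] uv aC by simp
  hence w2: "w \<preceq> x" using le_trans[OF _ _ _ _ mp[of a x]] wC uv aC c unfolding v_def by simp
  have "w \<preceq> (x \<Rightarrow>\<^sub>A y) \<sqinter> x" using le_meet_iff w1 w2 wC c by simp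
  hence "w \<preceq> y" using le_trans[OF _ _ _ _ mp[of x y]] wC c by simp
  hence "u \<sqinter> v \<preceq> (a \<Rightarrow>\<^sub>A y)" using impiff[of a y "u \<sqinter> v"] uv aC c unfolding w_def by simp
  hence "u \<preceq> (v \<Rightarrow>\<^sub>A (a \<Rightarrow>\<^sub>A y))" using impiff[of v "a \<Rightarrow>\<^sub>A y" u] uv aC c by simp
  thus ?thesis unfolding u_def v_def .
qed

lemma K2: "x \<in> C \<Longrightarrow> y \<in> C \<Longrightarrow> (a \<Rightarrow>\<^sub>A (x \<Rightarrow>\<^sub>A y)) \<preceq> ((x \<sqinter> a) \<Rightarrow>\<^sub>A (y \<sqinter> a))"
proof -
  assume c: "x \<in> C" "y \<in> C"
  define u where "u = (a \<Rightarrow>\<^sub>A (x \<Rightarrow>\<^sub>A y))"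
  have uC: "u \<in> C" using c aC unfolding u_def by simp
  define w where "w = u \<sqinter> (x \<sqinter> a)"
  have wC: "w \<in> C" using uC c aC unfolding w_def by simp
  have wxa: "w \<preceq> x \<sqinter> a" unfolding w_def using mle2 uC c aC by simp
  hence wx: "w \<preceq> x" and wa: "w \<preceq> a" using le_meet_iff[of x a w] wC c aC by auto
  have wu: "w \<preceq> u" unfolding w_def using mle1 uC c aC by simp
  have "w \<preceq> u \<sqinter> a" using le_meet_iff[of u a w] wu wa wC uC aC by simp
  hence w1: "w \<preceq> (x \<Rightarrow>\<^sub>A y)" using le_trans[OF _ _ _ _ mp[of a "x \<Rightarrow>\<^sub>A y"]] wC uC aC c unfolding u_def by simp
  have "w \<preceq> (x \<Rightarrow>\<^sub>A y) \<sqinter> x" using le_meet_iff w1 wx wC c by simp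
  hence "w \<preceq> y" using le_trans[OF _ _ _ _ mp[of x y]] wC c by simp
  hence "w \<preceq> y \<sqinter> a" using le_meet_iff[of y a w] wa wC c aC by simp
  hence "u \<preceq> ((x \<sqinter> a) \<Rightarrow>\<^sub>A (y \<sqinter> a))" using impiff[of "x \<sqinter> a" "y \<sqinter> a" u] uC c aC unfolding w_def by simp
  thus ?thesis unfolding u_def .
qed


lemma Qin: "x \<in> C \<Longrightarrow> cl x \<in> carrier Q"
  by (simp add: Qcar)

lemma QM: "monadic_heyting_algebra Ag Q"
  unfolding monadic_heyting_algebra_def
proof (rule conjI[OF QHA], rule ballI)
  fix i assume i: "i \<in> Ag"
  have h1: "\<forall>x\<in>carrier Q. dia Q i x \<in> carrier Q \<and> box Q i x \<in> carrier Q"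
    unfolding Qcar BI using i aC by (simp add: Qdia Qbox)
  have h2: "\<forall>x\<in>carrier Q. \<forall>y\<in>carrier Q. le Q x y \<longrightarrow> le Q (dia Q i x) (dia Q i y) \<and> le Q (box Q i x) (box Q i y)"
    unfolding Qcar BI
  proof (intro ballI impI conjI)
    fix x y assume c: "x \<in> C" "y \<in> C" and h: "le Q (cl x) (cl y)"
    hence "x \<sqinter> a \<preceq> y" using Qle by simp
    hence xy: "x \<sqinter> a \<preceq> y \<sqinter> a" using le_meet_iff[of y a "x \<sqinter> a"] mle2[of x a] c aC by simp
    have "dia A i (x \<sqinter> a) \<preceq> dia A i (y \<sqinter> a)" using dmono[OF i _ _ xy] c aC by simp
    hence "dia A i (x \<sqinter> a) \<sqinter> a \<preceq> dia A i (y \<sqinter> a)" using trans_m1 c aC i by simp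
    thus "le Q (dia Q i (cl x)) (dia Q i (cl y))" using c aC i by (simp add: Qdia Qle)
    have "(a \<Rightarrow>\<^sub>A (x \<sqinter> a)) \<preceq> (a \<Rightarrow>\<^sub>A (y \<sqinter> a))" using imp_mono[OF _ _ _ xy] c aC by simp
    hence "(a \<Rightarrow>\<^sub>A x) \<preceq> (a \<Rightarrow>\<^sub>A y)" using ai c by simp
    hence "box A i (a \<Rightarrow>\<^sub>A x) \<preceq> box A i (a \<Rightarrow>\<^sub>A y)" using bmono[OF i] c aC by simp
    hence "box A i (a \<Rightarrow>\<^sub>A x) \<sqinter> a \<preceq> box A i (a \<Rightarrow>\<^sub>A y)" using trans_m1 c aC i by simp
    thus "le Q (box Q i (cl x)) (box Q i (cl y))" using c aC i by (simp add: Qbox Qle)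
  qed
  have h3: "\<forall>x\<in>carrier Q. \<forall>y\<in>carrier Q.
           le Q x (dia Q i x) \<and>
           le Q (box Q i x) x \<and>
           le Q (dia Q i (join Q x y)) (join Q (dia Q i x) (dia Q i y)) \<and>
           le Q (box Q i (imp Q x y)) (imp Q (box Q i x) (box Q i y)) \<and>
           le Q (dia Q i x) (box Q i (dia Q i x)) \<and>
           le Q (dia Q i (box Q i x)) (box Q i x) \<and>
           le Q (box Q i (imp Q x y)) (imp Q (dia Q i x) (dia Q i y))"
    unfolding Qcar BI
  proof (intro ballI conjI)
    fix x y assume c: "x \<in> C" "y \<in> C"
    note A = ax[OF i]
    show "le Q (cl x) (dia Q i (cl x))" using c aC i A[of "x \<sqinter> a" "x \<sqinter> a"] by (simp add: Qdia Qle)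
    have "box A i (a \<Rightarrow>\<^sub>A x) \<sqinter> a \<preceq> (a \<Rightarrow>\<^sub>A x) \<sqinter> a"
      using meet_mono A[of "a \<Rightarrow>\<^sub>A x" "a \<Rightarrow>\<^sub>A x"] c aC i by simp
    hence "box A i (a \<Rightarrow>\<^sub>A x) \<sqinter> a \<preceq> x" using le_trans[OF _ _ _ _ mp[of a x]] c aC i by simp
    thus "le Q (box Q i (cl x)) (cl x)" using c aC i by (simp add: Qbox Qle)
    have "dia A i ((x \<squnion> y) \<sqinter> a) \<preceq> dia A i (x \<sqinter> a) \<squnion> dia A i (y \<sqinter> a)"
      using fj[of x y] A[of "x \<sqinter> a" "y \<sqinter> a"] c aC by simp
    hence "dia A i ((x \<squnion> y) \<sqinter> a) \<sqinter> a \<preceq> dia A i (x \<sqinter> a) \<squnion> dia A i (y \<sqinter> a)" using trans_m1 c aC i by simp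
    thus "le Q (dia Q i (join Q (cl x) (cl y))) (join Q (dia Q i (cl x)) (dia Q i (cl y)))"
      using c aC i by (simp add: Qdia Qle Qjoin)
    have "box A i (a \<Rightarrow>\<^sub>A (x \<Rightarrow>\<^sub>A y)) \<preceq> box A i ((a \<Rightarrow>\<^sub>A x) \<Rightarrow>\<^sub>A (a \<Rightarrow>\<^sub>A y))"
      using bmono[OF i _ _ K[of x y]] c aC by simp
    hence "box A i (a \<Rightarrow>\<^sub>A (x \<Rightarrow>\<^sub>A y)) \<preceq> (box A i (a \<Rightarrow>\<^sub>A x) \<Rightarrow>\<^sub>A box A i (a \<Rightarrow>\<^sub>A y))"
      using le_trans[OF _ _ _ _ conjunct1[OF conjunct2[OF conjunct2[OF conjunct2[OF A[of "a \<Rightarrow>\<^sub>A x" "a \<Rightarrow>\<^sub>A y"]]]]]] c aC i by simp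
    hence "box A i (a \<Rightarrow>\<^sub>A (x \<Rightarrow>\<^sub>A y)) \<sqinter> a \<preceq> (box A i (a \<Rightarrow>\<^sub>A x) \<Rightarrow>\<^sub>A box A i (a \<Rightarrow>\<^sub>A y))" using trans_m1 c aC i by simp
    thus "le Q (box Q i (imp Q (cl x) (cl y))) (imp Q (box Q i (cl x)) (box Q i (cl y)))"
      using c aC i by (simp add: Qbox Qle Qimp)
    define d where "d = dia A i (x \<sqinter> a)"
    have dC: "d \<in> C" using c aC i unfolding d_def by simp
    have "d \<sqinter> a \<preceq> d" using mle1 dC aC by simp
    hence "d \<preceq> (a \<Rightarrow>\<^sub>A d)" using impiff dC aC by simp
    hence "box A i d \<preceq> box A i (a \<Rightarrow>\<^sub>A d)" using bmono[OF i] dC aC by simp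
    moreover have "d \<preceq> box A i d" using A[of "x \<sqinter> a" "x \<sqinter> a"] c aC unfolding d_def by simp
    ultimately have "d \<preceq> box A i (a \<Rightarrow>\<^sub>A d)" using le_trans[of d "box A i d" "box A i (a \<Rightarrow>\<^sub>A d)"] dC aC i by simp
    hence "d \<sqinter> a \<preceq> box A i (a \<Rightarrow>\<^sub>A d)" using trans_m1 dC aC i by simp
    thus "le Q (dia Q i (cl x)) (box Q i (dia Q i (cl x)))"
      using c aC i dC by (simp add: Qbox Qle Qdia d_def)
    define bx where "bx = box A i (a \<Rightarrow>\<^sub>A x)"
    have bxC: "bx \<in> C" using c aC i unfolding bx_def by simp
    have "dia A i (bx \<sqinter> a) \<preceq> dia A i bx" using dmono[OF i _ _ mle1[of bx a]] bxC aC by simp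
    hence "dia A i (bx \<sqinter> a) \<preceq> bx"
      using le_trans[OF _ _ _ _ conjunct1[OF conjunct2[OF conjunct2[OF conjunct2[OF conjunct2[OF conjunct2[OF A[of "a \<Rightarrow>\<^sub>A x" "a \<Rightarrow>\<^sub>A x"]]]]]]]] bxC aC i c unfolding bx_def by simp
    hence "dia A i (bx \<sqinter> a) \<sqinter> a \<preceq> bx" using trans_m1 bxC aC i by simp
    thus "le Q (dia Q i (box Q i (cl x))) (box Q i (cl x))"
      using c aC i bxC by (simp add: Qbox Qle Qdia bx_def)
    have "box A i (a \<Rightarrow>\<^sub>A (x \<Rightarrow>\<^sub>A y)) \<preceq> box A i ((x \<sqinter> a) \<Rightarrow>\<^sub>A (y \<sqinter> a))"
      using bmono[OF i _ _ K2[of x y]] c aC by simp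
    hence "box A i (a \<Rightarrow>\<^sub>A (x \<Rightarrow>\<^sub>A y)) \<preceq> (dia A i (x \<sqinter> a) \<Rightarrow>\<^sub>A dia A i (y \<sqinter> a))"
      using le_trans[OF _ _ _ _ conjunct2[OF conjunct2[OF conjunct2[OF conjunct2[OF conjunct2[OF conjunct2[OF A[of "x \<sqinter> a" "y \<sqinter> a"]]]]]]]] c aC i by simp
    hence "box A i (a \<Rightarrow>\<^sub>A (x \<Rightarrow>\<^sub>A y)) \<sqinter> a \<preceq> (dia A i (x \<sqinter> a) \<Rightarrow>\<^sub>A dia A i (y \<sqinter> a))" using trans_m1 c aC i by simp
    thus "le Q (box Q i (imp Q (cl x) (cl y))) (imp Q (dia Q i (cl x)) (dia Q i (cl y)))"
      using c aC i by (simp add: Qbox Qle Qimp Qdia)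
  qed
  have ba: "bot A \<sqinter> a = bot A" using le_meetD botle aC by simp
  have "dia A i (bot A) \<sqinter> a \<preceq> bot A" using trans_m1[OF _ _ _ ax8[OF i]] aC i by simp
  hence h4: "le Q (dia Q i (bot Q)) (bot Q)" using ba aC i by (simp add: Qbot Qdia Qle)
  have "top A \<sqinter> a \<preceq> top A" using letop aC by simp
  hence "top A \<preceq> (a \<Rightarrow>\<^sub>A top A)" using impiff aC by simp
  hence at: "(a \<Rightarrow>\<^sub>A top A) = top A" using le_antisym letop aC by simp
  have "top A \<sqinter> a \<preceq> box A i (top A)" using trans_m1[OF _ _ _ ax9[OF i]] aC i by simp
  hence h5: "le Q (top Q) (box Q i (top Q))" using at aC i by (simp add: Qtop Qbox Qle)
  show "(\<forall>x\<in>carrier Q. dia Q i x \<in> carrier Q \<and> box Q i x \<in> carrier Q) \<and>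
        (\<forall>x\<in>carrier Q. \<forall>y\<in>carrier Q. le Q x y \<longrightarrow> le Q (dia Q i x) (dia Q i y) \<and> le Q (box Q i x) (box Q i y)) \<and>
        (\<forall>x\<in>carrier Q. \<forall>y\<in>carrier Q.
           le Q x (dia Q i x) \<and>
           le Q (box Q i x) x \<and>
           le Q (dia Q i (join Q x y)) (join Q (dia Q i x) (dia Q i y)) \<and>
           le Q (box Q i (imp Q x y)) (imp Q (box Q i x) (box Q i y)) \<and>
           le Q (dia Q i x) (box Q i (dia Q i x)) \<and>
           le Q (dia Q i (box Q i x)) (box Q i x) \<and>
           le Q (box Q i (imp Q x y)) (imp Q (dia Q i x) (dia Q i y))) \<and>
        le Q (dia Q i (bot Q)) (bot Q) \<and>
        le Q (top Q) (box Q i (top Q))"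
    using h1 h2 h3 h4 h5 by blast
qed

lemma QE: "epistemic_heyting_algebra Ag Q"
  unfolding epistemic_heyting_algebra_def
proof (intro conjI QM ballI)
  show "finite (carrier Q)" using finC by (simp add: Qcar)
  fix i X assume i: "i \<in> Ag" and X: "X \<in> carrier Q"
  then obtain x where c: "x \<in> C" and Xx: "X = cl x" by (auto simp: Qcar)
  define d where "d = dia A i (x \<sqinter> a)"
  have dC: "d \<in> C" using c aC i unfolding d_def by simp
  have "join Q (dia Q i X) (neg Q (dia Q i X)) = cl (d \<squnion> (d \<Rightarrow>\<^sub>A bot A))"
    unfolding neg_def using c dC by (simp add: Xx Qdia Qimp Qjoin Qbot d_def)
  also have "\<dots> = top Q" using epi[OF i, of "x \<sqinter> a"] c aC by (simp add: d_def Qtop)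
  finally show "join Q (dia Q i X) (neg Q (dia Q i X)) = top Q" .
qed

end

theorem proposition8:
  fixes Ag :: "'i set" and A :: "('i, 'a) mha" and a :: 'a
  assumes "epistemic_heyting_algebra Ag A"
    and "a \<in> carrier A"
  shows "epistemic_heyting_algebra Ag (pseudo_quotient A a)"
proof -
  have "heyting_algebra A" using assms(1)
    unfolding epistemic_heyting_algebra_def monadic_heyting_algebra_def by simp
  then interpret EPQ A a Ag
    by (unfold_locales) (use assms in auto)
  show ?thesis using QE .
qed

end
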